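(* Let $b\in\mathbb R$, $\omega>0$, $\mathcal B>0$, $y\in\mathbb R^2\setminus\{0\}$, $\eta\in\mathbb R^2$ with $y\wedge\eta\ne b$, and let $Z(t,y,\eta)=\xi^t_\eta-i\mathcal B\,x^t_\eta$. Then $Z$ is a non-degenerate matrix-function for all $t\ge0$. Moreover $$\det Z=\Big(\cos(\omega t)-i\mathcal B\omega^{-1}\sin(\omega t)\Big)^2-b^2\omega^{-2}|x^t|^{-4}\sin^2(\omega t),$$ and the eigenvalues of $Z$ are $$\mu_{1,2}=\cos(\omega t)-i\mathcal B\omega^{-1}\sin(\omega t)\pm b\,\omega^{-1}|x^t|^{-2}\sin(\omega t).$$
   Context: $A(x)=\big(-b\,x_2/|x|^2,\ b\,x_1/|x|^2\big)$ for $x\ne0$; $u\wedge v=u_1v_2-u_2v_1$. $(x^t,\xi^t)=(x^t(y,\eta),\xi^t(y,\eta))$ is the solution of Hamilton's equations for $h(x,\xi)=\frac12|\xi-A(x)|^2+\frac{\omega^2}{2}|x|^2$: $\dot x^t=\xi^t-A(x^t)$, $\dot\xi^t=-h_x(x^t,\xi^t)$, $x^0=y$, $\xi^0=\eta$; explicitly (the trajectory never meets the origin since $y\wedge\eta\ne b$) $x^t=\cos(\omega t)y+\frac{\sin(\omega t)}{\omega}(\eta-A(y))$, $\xi^t=\dot x^t+A(x^t)$. Here $x^t_\eta,\xi^t_\eta$ denote the $2\times2$ Jacobian matrices with respect to $\eta$. *)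

theory Defs
  imports "HOL-Analysis.Analysis"
begin

definition wedge :: "real^2 \<Rightarrow> real^2 \<Rightarrow> real" where
  "wedge u v = u$1 * v$2 - u$2 * v$1"

definition Apot :: "real \<Rightarrow> real^2 \<Rightarrow> real^2" where
  "Apot b x = vector [- b * x$2 / (norm x)^2, b * x$1 / (norm x)^2]"

definition xt :: "real \<Rightarrow> real \<Rightarrow> real \<Rightarrow> real^2 \<Rightarrow> real^2 \<Rightarrow> real^2" where
  "xt b \<omega> t y \<eta> = cos (\<omega> * t) *\<^sub>R y + (sin (\<omega> * t) / \<omega>) *\<^sub>R (\<eta> - Apot b y)"

definition xit :: "real \<Rightarrow> real \<Rightarrow> real \<Rightarrow> real^2 \<Rightarrow> real^2 \<Rightarrow> real^2" where
  "xit b \<omega> t y \<eta> = vector_derivative (\<lambda>s. xt b \<omega> s y \<eta>) (at t) + Apot b (xt b \<omega> t y \<eta>)"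

definition Zmat :: "real \<Rightarrow> real \<Rightarrow> real \<Rightarrow> real \<Rightarrow> real^2 \<Rightarrow> real^2 \<Rightarrow> complex^2^2" where
  "Zmat b \<omega> B t y \<eta> =
     (\<chi> i j. complex_of_real (jacobian (\<lambda>e. xit b \<omega> t y e) (at \<eta>) $ i $ j)
              - \<i> * complex_of_real B * complex_of_real (jacobian (\<lambda>e. xt b \<omega> t y e) (at \<eta>) $ i $ j))"

end

theory Submission imports Defs begin

definition rot :: "real^2 \<Rightarrow> real^2" where "rot x = vector [- x$2, x$1]"

lemma rot_lin: "bounded_linear rot"
proof -
  have "linear rot" unfolding rot_def
    by (rule linearI) (auto simp: vec_eq_iff forall_2)
  thus ?thesis by (simp add: linear_conv_bounded_linear)
qed

lemma Apot_eq: "Apot b x = (b / (x \<bullet> x)) *\<^sub>R rot x"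
  by (simp add: Apot_def rot_def vec_eq_iff forall_2 power2_norm_eq_inner)

definition DA where "DA b x h = (-(b*(2*(x \<bullet> h)))/(x \<bullet> x)^2) *\<^sub>R rot x + (b/(x \<bullet> x)) *\<^sub>R rot h"

lemma Apot_deriv: assumes "x \<noteq> 0" shows "(Apot b has_derivative DA b x) (at x)"
proof -
  have xx: "x \<bullet> x \<noteq> 0" using assms by simp
  have d1: "((\<lambda>x. b/(x \<bullet> x)) has_derivative (\<lambda>h. -(b*(2*(x \<bullet> h)))/(x \<bullet> x)^2)) (at x)"
    apply (rule has_derivative_eq_rhs)
     apply (auto intro!: derivative_eq_intros)[1]
    using assms by (auto simp: fun_eq_iff field_simps inner_commute power2_eq_square)
  have "((\<lambda>x. (b / (x \<bullet> x)) *\<^sub>R rot x) has_derivative DA b x) (at x)"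
    unfolding DA_def
    apply (rule has_derivative_eq_rhs)
     apply (rule has_derivative_scaleR[OF d1 bounded_linear.has_derivative[OF rot_lin has_derivative_ident]])
    by (auto simp: fun_eq_iff)
  thus ?thesis by (simp add: Apot_eq[abs_def])
qed

lemma inner2: "(x::real^2) \<bullet> y = x$1*y$1 + x$2*y$2"
  by (simp add: inner_vec_def sum_2)

lemma aux_div: "(r::real) \<noteq> 0 \<Longrightarrow> r = p*p+q*q \<Longrightarrow> p*(b*p/r) - q*(-b*q/r) = b"
proof -
  assume r: "r \<noteq> 0" "r = p*p+q*q"
  have "p*(b*p/r) - q*(-b*q/r) = b * (p*p+q*q) / r" using r(1) by (simp add: field_simps)
  also have "\<dots> = b * r / r" by (simp only: r(2)[symmetric])
  also have "\<dots> = b" using r(1) by simp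
  finally show ?thesis .
qed

lemma wedge_A: assumes "y \<noteq> 0" shows "wedge y (Apot b y) = b"
proof -
  have r: "y$1*y$1 + y$2*y$2 \<noteq> 0" using assms
    by (metis inner2 inner_eq_zero_iff)
  show ?thesis
    unfolding wedge_def Apot_eq rot_def inner2
    using aux_div[OF r refl] by simp
qed

lemma xt_nz:
  assumes "\<omega> > 0" "y \<noteq> 0" "wedge y \<eta> \<noteq> b"
  shows "xt b \<omega> t y \<eta> \<noteq> 0"
proof
  assume h: "xt b \<omega> t y \<eta> = 0"
  define v where "v = \<eta> - Apot b y"
  define c where "c = cos (\<omega>*t)"
  define s where "s = sin (\<omega>*t) / \<omega>"
  have e: "c *\<^sub>R y + s *\<^sub>R v = 0" using h by (simp add: xt_def c_def s_def v_def)
  have "wedge y v = wedge y \<eta> - wedge y (Apot b y)" by (simp add: v_def wedge_def algebra_simps)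
  hence wv: "wedge y v \<noteq> 0" using wedge_A[OF assms(2), of b] assms(3) by simp
  have e1: "c * y$1 + s * v$1 = 0" and e2: "c * y$2 + s * v$2 = 0"
    using e by (auto simp: vec_eq_iff forall_2)
  have "s * wedge y v = 0" unfolding wedge_def
  proof -
    have "s * (y $ 1 * v $ 2 - y $ 2 * v $ 1) = y$1 * (c * y$2 + s * v$2) - y$2 * (c * y$1 + s * v$1)"
      by (simp add: algebra_simps)
    also have "\<dots> = 0" using e1 e2 by simp
    finally show "s * (y $ 1 * v $ 2 - y $ 2 * v $ 1) = 0" .
  qed
  hence "s = 0" using wv by simp
  hence "sin (\<omega>*t) = 0" using assms(1) by (simp add: s_def)
  hence "c \<noteq> 0" unfolding c_def using sin_cos_squared_add[of "\<omega>*t"] by auto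
  hence "y = 0" using e \<open>s = 0\<close> by simp
  thus False using assms(2) by simp
qed

lemma xt_deriv_e: "((\<lambda>e. xt b \<omega> t y e) has_derivative (\<lambda>h. (sin (\<omega>*t)/\<omega>) *\<^sub>R h)) (at \<eta>)"
  unfolding xt_def
  apply (rule has_derivative_eq_rhs)
   apply (rule derivative_eq_intros refl)+
  by (simp add: fun_eq_iff)

lemma xt_vderiv: "\<omega> \<noteq> 0 \<Longrightarrow> ((\<lambda>s. xt b \<omega> s y e) has_vector_derivative
   ((- \<omega> * sin (\<omega>*t)) *\<^sub>R y + cos (\<omega>*t) *\<^sub>R (e - Apot b y))) (at t)"
  unfolding xt_def
  apply (rule has_vector_derivative_eq_rhs)
   apply (auto intro!: derivative_eq_intros)[1]
  apply (simp add: algebra_simps)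
  done


lemma xit_eq: "\<omega> \<noteq> 0 \<Longrightarrow> xit b \<omega> t y e =
   (- \<omega> * sin (\<omega>*t)) *\<^sub>R y + cos (\<omega>*t) *\<^sub>R (e - Apot b y) + Apot b (xt b \<omega> t y e)"
  unfolding xit_def using vector_derivative_at[OF xt_vderiv] by simp

lemma xit_deriv_e:
  assumes "\<omega> \<noteq> 0" "xt b \<omega> t y \<eta> \<noteq> 0"
  shows "((\<lambda>e. xit b \<omega> t y e) has_derivative
     (\<lambda>h. cos (\<omega>*t) *\<^sub>R h + DA b (xt b \<omega> t y \<eta>) ((sin (\<omega>*t)/\<omega>) *\<^sub>R h))) (at \<eta>)"
proof -
  have c: "((\<lambda>e. Apot b (xt b \<omega> t y e)) has_derivative
     (\<lambda>h. DA b (xt b \<omega> t y \<eta>) ((sin (\<omega>*t)/\<omega>) *\<^sub>R h))) (at \<eta>)"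
    using diff_chain_at[OF xt_deriv_e Apot_deriv[OF assms(2)]] by (simp add: o_def)
  show ?thesis unfolding xit_eq[OF assms(1)]
    apply (rule has_derivative_eq_rhs)
     apply (rule derivative_eq_intros c refl)+
    by (simp add: fun_eq_iff)
qed


lemma DA_scale: "DA b x (k *\<^sub>R h) = k *\<^sub>R DA b x h"
proof -
  have "rot (k *\<^sub>R h) = k *\<^sub>R rot h" using rot_lin by (simp add: linear_simps)
  thus ?thesis unfolding DA_def by (simp add: algebra_simps)
qed

lemma Zmat_entries:
  fixes b \<omega> B t :: real and y \<eta> :: "real^2"
  assumes w: "\<omega> \<noteq> 0" and x0: "xt b \<omega> t y \<eta> \<noteq> 0"
  defines "p \<equiv> xt b \<omega> t y \<eta> $ 1" and "q \<equiv> xt b \<omega> t y \<eta> $ 2"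
  defines "r \<equiv> p*p+q*q" and "\<beta> \<equiv> sin (\<omega>*t)/\<omega>" and "c \<equiv> cos (\<omega>*t)"
  shows "Zmat b \<omega> B t y \<eta> $ 1 $ 1 = of_real (c + \<beta>*(2*b*p*q/r^2)) - \<i>*B*\<beta>"
    "Zmat b \<omega> B t y \<eta> $ 1 $ 2 = of_real (\<beta>*(b*(q*q-p*p)/r^2))"
    "Zmat b \<omega> B t y \<eta> $ 2 $ 1 = of_real (\<beta>*(b*(q*q-p*p)/r^2))"
    "Zmat b \<omega> B t y \<eta> $ 2 $ 2 = of_real (c - \<beta>*(2*b*p*q/r^2)) - \<i>*B*\<beta>"
proof -
  have r0: "r \<noteq> 0" using x0 unfolding r_def p_def q_def by (metis inner2 inner_eq_zero_iff)
  have J1: "jacobian (\<lambda>e. xt b \<omega> t y e) (at \<eta>) = matrix (\<lambda>h. (sin (\<omega>*t)/\<omega>) *\<^sub>R h)"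
    unfolding jacobian_def using frechet_derivative_at[OF xt_deriv_e] by simp
  have J2: "jacobian (\<lambda>e. xit b \<omega> t y e) (at \<eta>) = matrix (\<lambda>h. cos (\<omega>*t) *\<^sub>R h + DA b (xt b \<omega> t y \<eta>) ((sin (\<omega>*t)/\<omega>) *\<^sub>R h))"
    unfolding jacobian_def using frechet_derivative_at[OF xit_deriv_e[OF w x0]] by simp
  have xx: "xt b \<omega> t y \<eta> \<bullet> xt b \<omega> t y \<eta> = r" unfolding r_def p_def q_def inner2 by simp
  let ?J = "jacobian (\<lambda>e. xit b \<omega> t y e) (at \<eta>)"
  let ?K = "jacobian (\<lambda>e. xt b \<omega> t y e) (at \<eta>)"
  have K: "?K $ i $ j = (if i = j then \<beta> else 0)" for i j
    unfolding J1 matrix_def by (simp add: axis_def \<beta>_def)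
  have Jc: "?J $ i $ j = c * (if i = j then 1 else 0) + \<beta> * DA b (xt b \<omega> t y \<eta>) (axis j 1) $ i" for i j
    unfolding J2 matrix_def by (simp add: DA_scale \<beta>_def c_def axis_def)
  have D: "DA b (xt b \<omega> t y \<eta>) h = (-(b*(2*(p*h$1+q*h$2)))/r^2) *\<^sub>R vector [-q, p] + (b/r) *\<^sub>R vector [-h$2, h$1]" for h
    unfolding DA_def xx rot_def by (simp add: inner2 p_def q_def)
  have J11: "?J $ 1 $ 1 = c + \<beta>*(2*b*p*q/r^2)" unfolding Jc D by (simp add: axis_def)
  have A1: "(-(b*(2*q)))/r^2*(-q) + (b/r)*(-1) = b*(q*q-p*p)/r^2"
  proof -
    have "(-(b*(2*q)))/r^2*(-q) + (b/r)*(-1) = (b*(2*q*q) - b*r)/r^2" using r0 by (simp add: field_simps power2_eq_square eval_nat_numeral)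
    also have "b*(2*q*q) - b*r = b*(q*q-p*p)" by (simp add: r_def algebra_simps)
    finally show ?thesis .
  qed
  have A2: "(-(b*(2*p)))/r^2*p + (b/r)*1 = b*(q*q-p*p)/r^2"
  proof -
    have "(-(b*(2*p)))/r^2*p + (b/r)*1 = (b*r - b*(2*p*p))/r^2" using r0 by (simp add: field_simps power2_eq_square eval_nat_numeral)
    also have "b*r - b*(2*p*p) = b*(q*q-p*p)" by (simp add: r_def algebra_simps)
    finally show ?thesis .
  qed
  have J12: "?J $ 1 $ 2 = \<beta>*(b*(q*q-p*p)/r^2)" unfolding Jc D A1[symmetric] by (simp add: axis_def)
  have J21: "?J $ 2 $ 1 = \<beta>*(b*(q*q-p*p)/r^2)" unfolding Jc D A2[symmetric] by (simp add: axis_def)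
  have J22: "?J $ 2 $ 2 = c - \<beta>*(2*b*p*q/r^2)" unfolding Jc D by (simp add: axis_def)
  show "Zmat b \<omega> B t y \<eta> $ 1 $ 1 = of_real (c + \<beta>*(2*b*p*q/r^2)) - \<i>*B*\<beta>"
    unfolding Zmat_def by (simp only: vec_lambda_beta J11 K) simp
  show "Zmat b \<omega> B t y \<eta> $ 1 $ 2 = of_real (\<beta>*(b*(q*q-p*p)/r^2))"
    unfolding Zmat_def by (simp only: vec_lambda_beta J12 K) simp
  show "Zmat b \<omega> B t y \<eta> $ 2 $ 1 = of_real (\<beta>*(b*(q*q-p*p)/r^2))"
    unfolding Zmat_def by (simp only: vec_lambda_beta J21 K) simp
  show "Zmat b \<omega> B t y \<eta> $ 2 $ 2 = of_real (c - \<beta>*(2*b*p*q/r^2)) - \<i>*B*\<beta>"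
    unfolding Zmat_def by (simp only: vec_lambda_beta J22 K) simp
qed



lemma eig2:
  fixes A :: "complex^2^2"
  shows "(\<exists>v. v \<noteq> 0 \<and> A *v v = \<mu> *s v) \<longleftrightarrow> (A$1$1-\<mu>)*(A$2$2-\<mu>) - A$1$2*A$2$1 = 0"
    (is "?L \<longleftrightarrow> ?R")
proof
  assume ?L
  then obtain w where v: "w \<noteq> 0" "A *v w = \<mu> *s w" by blast
  have e1: "(A$1$1-\<mu>)* w$1 + A$1$2* w$2 = 0" and e2: "A$2$1* w$1 + (A$2$2-\<mu>)* w$2 = 0"
    using v(2) by (auto simp: vec_eq_iff forall_2 matrix_vector_mult_def sum_2 algebra_simps)
  have d1: "((A$1$1-\<mu>)*(A$2$2-\<mu>) - A$1$2*A$2$1) * w$1 = 0"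
  proof -
    have "((A$1$1-\<mu>)*(A$2$2-\<mu>) - A$1$2*A$2$1) * w$1 = (A$2$2-\<mu>)*((A$1$1-\<mu>)* w$1 + A$1$2* w$2) - A$1$2*(A$2$1* w$1 + (A$2$2-\<mu>)* w$2)"
      by (simp add: algebra_simps)
    thus ?thesis using e1 e2 by simp
  qed
  have d2: "((A$1$1-\<mu>)*(A$2$2-\<mu>) - A$1$2*A$2$1) * w$2 = 0"
  proof -
    have "((A$1$1-\<mu>)*(A$2$2-\<mu>) - A$1$2*A$2$1) * w$2 = (A$1$1-\<mu>)*(A$2$1* w$1 + (A$2$2-\<mu>)* w$2) - A$2$1*((A$1$1-\<mu>)* w$1 + A$1$2* w$2)"
      by (simp add: algebra_simps)
    thus ?thesis using e1 e2 by simp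
  qed
  have "w$1 \<noteq> 0 \<or> w$2 \<noteq> 0" using v(1) by (auto simp: vec_eq_iff forall_2)
  thus ?R using d1 d2 by auto
next
  assume R: ?R
  let ?a = "A$1$1-\<mu>" and ?b = "A$1$2" and ?c = "A$2$1" and ?d = "A$2$2-\<mu>"
  have key: "A *v w = \<mu> *s w \<longleftrightarrow> ?a* w$1 + ?b* w$2 = 0 \<and> ?c* w$1 + ?d* w$2 = 0" for w
    by (auto simp: vec_eq_iff forall_2 matrix_vector_mult_def sum_2 algebra_simps)
  show ?L
  proof (cases "?a = 0 \<and> ?b = 0")
    case False
    let ?v = "vector [?b, - ?a] :: complex^2"
    have "?v \<noteq> 0" using False by (auto simp: vec_eq_iff forall_2)
    moreover have "A *v ?v = \<mu> *s ?v" unfolding key using R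
      by (simp add: algebra_simps)
    ultimately show ?thesis by blast
  next
    case True
    show ?thesis
    proof (cases "?c = 0 \<and> ?d = 0")
      case False
      let ?v = "vector [?d, - ?c] :: complex^2"
      have "?v \<noteq> 0" using False by (auto simp: vec_eq_iff forall_2)
      moreover have "A *v ?v = \<mu> *s ?v" unfolding key using True
        by (simp add: algebra_simps)
      ultimately show ?thesis by blast
    next
      case False2: True
      let ?v = "vector [1, 0] :: complex^2"
      have "?v \<noteq> 0" by (auto simp: vec_eq_iff forall_2)
      moreover have "A *v ?v = \<mu> *s ?v" unfolding key using True False2
        by simp
      ultimately show ?thesis by blast
    qed
  qed
qed

theorem proposition3p3:
  fixes b \<omega> B t :: real and y \<eta> :: "real^2"
  assumes "\<omega> > 0" and "B > 0" and "y \<noteq> 0" and "wedge y \<eta> \<noteq> b" and "t \<ge> 0"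
  shows "det (Zmat b \<omega> B t y \<eta>) \<noteq> 0
    \<and> det (Zmat b \<omega> B t y \<eta>) =
        (cos (\<omega> * t) - \<i> * B / \<omega> * sin (\<omega> * t))^2
        - b^2 / \<omega>^2 / (norm (xt b \<omega> t y \<eta>))^4 * (sin (\<omega> * t))^2
    \<and> {\<mu>. \<exists>v. v \<noteq> 0 \<and> Zmat b \<omega> B t y \<eta> *v v = \<mu> *s v} =
        {cos (\<omega> * t) - \<i> * B / \<omega> * sin (\<omega> * t) + b / \<omega> / (norm (xt b \<omega> t y \<eta>))^2 * sin (\<omega> * t),
         cos (\<omega> * t) - \<i> * B / \<omega> * sin (\<omega> * t) - b / \<omega> / (norm (xt b \<omega> t y \<eta>))^2 * sin (\<omega> * t)}"
proof -
  have w: "\<omega> \<noteq> 0" using assms(1) by simp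
  have x0: "xt b \<omega> t y \<eta> \<noteq> 0" using xt_nz assms by blast
  define x where "x = xt b \<omega> t y \<eta>"
  define p where "p = x $ 1"
  define q where "q = x $ 2"
  define r where "r = p*p+q*q"
  define \<beta> where "\<beta> = sin (\<omega>*t)/\<omega>"
  define c where "c = cos (\<omega>*t)"
  define k where "k = \<beta>*b/r"
  define \<alpha> where "\<alpha> = cos (\<omega> * t) - \<i> * B / \<omega> * sin (\<omega> * t)"
  define Z where "Z = Zmat b \<omega> B t y \<eta>"
  have r0: "r \<noteq> 0" using x0 unfolding r_def p_def q_def x_def by (metis inner2 inner_eq_zero_iff)
  have n2: "(norm x)^2 = r" unfolding r_def p_def q_def power2_norm_eq_inner inner2 by simp
  have n4: "(norm x)^4 = r^2" using n2 by (metis power_mult power2_eq_square numeral_Bit0 mult_2 numeral_One) 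
  have ad: "(\<beta>*(2*b*p*q/r^2))^2 + (\<beta>*(b*(q*q-p*p)/r^2))^2 = k^2"
  proof -
    have e1: "(\<beta>*(2*b*p*q/r^2))^2 + (\<beta>*(b*(q*q-p*p)/r^2))^2 = \<beta>^2*b^2*((2*p*q)^2+(q*q-p*p)^2)/r^4"
      using r0 by (simp add: field_simps power2_eq_square eval_nat_numeral)
    have e2: "(2*p*q)^2+(q*q-p*p)^2 = r*r" by (simp add: r_def algebra_simps power2_eq_square)
    have e3: "\<beta>^2*b^2*(r*r)/r^4 = k^2" unfolding k_def using r0 by (simp add: field_simps power2_eq_square eval_nat_numeral)
    show ?thesis using e1 e2 e3 by simp
  qed
  have \<alpha>e: "\<alpha> = of_real c - \<i>*B*\<beta>" unfolding \<alpha>_def c_def \<beta>_def by simp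
  have "Z$1$1 = of_real (c + \<beta>*(2*b*p*q/r^2)) - \<i>*B*\<beta>"
    unfolding Z_def x_def p_def q_def r_def \<beta>_def c_def by (rule Zmat_entries(1)[OF w x0])
  hence Z11: "Z$1$1 = \<alpha> + of_real (\<beta>*(2*b*p*q/r^2))" unfolding \<alpha>e by simp
  have "Z$2$2 = of_real (c - \<beta>*(2*b*p*q/r^2)) - \<i>*B*\<beta>"
    unfolding Z_def x_def p_def q_def r_def \<beta>_def c_def by (rule Zmat_entries(4)[OF w x0])
  hence Z22: "Z$2$2 = \<alpha> - of_real (\<beta>*(2*b*p*q/r^2))" unfolding \<alpha>e by simp
  have "Z$1$2 = of_real (\<beta>*(b*(q*q-p*p)/r^2))"
    unfolding Z_def x_def p_def q_def r_def \<beta>_def c_def by (rule Zmat_entries(2)[OF w x0])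
  hence Z12: "Z$1$2 = of_real (\<beta>*(b*(q*q-p*p)/r^2))" unfolding \<alpha>e by simp
  have "Z$2$1 = of_real (\<beta>*(b*(q*q-p*p)/r^2))"
    unfolding Z_def x_def p_def q_def r_def \<beta>_def c_def by (rule Zmat_entries(3)[OF w x0])
  hence Z21: "Z$2$1 = of_real (\<beta>*(b*(q*q-p*p)/r^2))" unfolding \<alpha>e by simp
  have cp: "(Z$1$1-\<mu>)*(Z$2$2-\<mu>) - Z$1$2*Z$2$1 = (\<alpha>-\<mu>)^2 - (of_real k)^2" for \<mu>
  proof -
    have "(Z$1$1-\<mu>)*(Z$2$2-\<mu>) - Z$1$2*Z$2$1 = (\<alpha>-\<mu>)^2 - of_real ((\<beta>*(2*b*p*q/r^2))^2 + (\<beta>*(b*(q*q-p*p)/r^2))^2)"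
      unfolding Z11 Z22 Z12 Z21 by (simp add: algebra_simps power2_eq_square)
    thus ?thesis unfolding ad by simp
  qed
  have K: "complex_of_real k = b / \<omega> / (norm x)^2 * sin (\<omega> * t)"
    unfolding k_def \<beta>_def n2 by simp
  have K2: "(complex_of_real k)^2 = b^2 / \<omega>^2 / (norm x)^4 * (sin (\<omega> * t))^2"
    unfolding K n4[symmetric] by (simp add: power_divide power_mult_distrib)
  have detZ: "det Z = \<alpha>^2 - (of_real k)^2"
    using cp[of 0] unfolding det_2 by simp
  have nz: "det Z \<noteq> 0"
  proof
    assume "det Z = 0"
    hence "(\<alpha> - of_real k) * (\<alpha> + of_real k) = 0" unfolding detZ by (simp add: algebra_simps power2_eq_square)
    then obtain s where s: "s = k \<or> s = -k" and e: "\<alpha> + of_real s = 0"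
      by (metis add_uminus_conv_diff mult_eq_0_iff of_real_minus)
    have "Im (\<alpha> + of_real s) = 0" using e by simp
    hence "B*\<beta> = 0" unfolding \<alpha>e by simp
    hence "\<beta> = 0" using assms(2) by simp
    hence sn: "sin (\<omega>*t) = 0" using w unfolding \<beta>_def by simp
    have "Re (\<alpha> + of_real s) = 0" using e by simp
    hence "c = 0" unfolding \<alpha>e using s \<open>\<beta> = 0\<close> by (auto simp: k_def)
    thus False using sn sin_cos_squared_add[of "\<omega>*t"] unfolding c_def by simp
  qed
  have eig: "{\<mu>. \<exists>v. v \<noteq> 0 \<and> Z *v v = \<mu> *s v} = {\<alpha> + of_real k, \<alpha> - of_real k}"
  proof -
    have "(\<alpha>-\<mu>)^2 - (of_real k)^2 = 0 \<longleftrightarrow> \<mu> = \<alpha> + of_real k \<or> \<mu> = \<alpha> - of_real k" for \<mu>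
    proof -
      have "(\<alpha>-\<mu>)^2 - (of_real k)^2 = (\<alpha> - \<mu> - of_real k) * (\<alpha> - \<mu> + of_real k)"
        by (simp add: algebra_simps power2_eq_square)
      moreover have "\<alpha> - \<mu> - of_real k = 0 \<longleftrightarrow> \<mu> = \<alpha> - of_real k" by (auto simp: algebra_simps)
      moreover have "\<alpha> - \<mu> + of_real k = 0 \<longleftrightarrow> \<mu> = \<alpha> + of_real k" by (auto simp: algebra_simps)
      ultimately show ?thesis by (simp only: mult_eq_0_iff) blast
    qed
    thus ?thesis unfolding eig2 cp by auto
  qed
  show ?thesis
    using nz detZ eig K K2 unfolding Z_def x_def \<alpha>_def by simp
qed

end
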